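(* Let $n$ be a positive integer. If $n\equiv 1\pmod 4$, then \[ \sum_{k=0}^{n-1}\frac{(q;q^4)_k^2}{(q^4;q^4)_k^2}\,q^{2k}\equiv \frac{(q^{3};q^4)_{(n-1)/4}}{(q^4;q^4)_{(n-1)/4}}\pmod{\Phi_n(q)}, \] and if $n\equiv 3\pmod 4$, then \[ \sum_{k=0}^{n-1}\frac{(q;q^4)_k^2}{(q^4;q^4)_k^2}\,q^{2k}\equiv 0\pmod{\Phi_n(q)}. \]
   Context: For an indeterminate (or complex number) $a$ and a nonnegative integer $k$, the $q$-Pochhammer symbol is $(a;q)_k=\prod_{j=0}^{k-1}(1-aq^j)$, with $(a;q)_0=1$. $\Phi_n(q)=\prod_{1\le j\le n,\ \gcd(j,n)=1}(q-e^{2\pi i j/n})$ denotes the $n$-th cyclotomic polynomial. A congruence between rational functions in $q$ modulo a polynomial $P(q)$ means that the difference, written as a ratio of polynomials with denominator coprime to $P(q)$, has numerator divisible by $P(q)$. *)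

theory Defs
  imports Complex_Main "HOL-Computational_Algebra.Polynomial_Factorial" "HOL-Computational_Algebra.Fraction_Field"
begin

definition qpoch :: "'a::comm_ring_1 \<Rightarrow> 'a \<Rightarrow> nat \<Rightarrow> 'a" where
  "qpoch a q k = (\<Prod>j<k. 1 - a * q ^ j)"

definition cyclotomic :: "nat \<Rightarrow> complex poly" where
  "cyclotomic n = (\<Prod>j\<in>{j. 1 \<le> j \<and> j \<le> n \<and> coprime j n}.
      [:- exp (2 * of_real pi * \<i> * of_nat j / of_nat n), 1:])"

definition qvar :: "complex poly fract" where
  "qvar = Fract [:0, 1:] 1"

definition rf_cong :: "complex poly fract \<Rightarrow> complex poly fract \<Rightarrow> complex poly \<Rightarrow> bool" where
  "rf_cong x y P \<longleftrightarrow> (\<exists>a b. b \<noteq> 0 \<and> x - y = Fract a b \<and> coprime b P \<and> P dvd a)"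

end

theory Submission
  imports Defs "HOL-Analysis.Complex_Transcendental" "HOL-Computational_Algebra.Field_as_Ring"
begin

definition ev :: "complex set \<Rightarrow> complex poly fract \<Rightarrow> (complex \<Rightarrow> complex) \<Rightarrow> bool" where
  "ev Z x f \<longleftrightarrow> (\<exists>a b. b \<noteq> 0 \<and> x = Fract a b \<and> (\<forall>z\<in>Z. poly b z \<noteq> 0 \<and> f z = poly a z / poly b z))"

lemma ev_poly: "ev Z (Fract p 1) (\<lambda>z. poly p z)"
  unfolding ev_def by (rule exI[of _ p], rule exI[of _ 1]) auto

lemma ev_one: "ev Z 1 (\<lambda>z. 1)"
  using ev_poly[of Z 1] by (simp add: One_fract_def)

lemma ev_zero: "ev Z 0 (\<lambda>z. 0)"
  using ev_poly[of Z 0] by (simp add: Zero_fract_def)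

lemma ev_add: "ev Z x f \<Longrightarrow> ev Z y g \<Longrightarrow> ev Z (x + y) (\<lambda>z. f z + g z)"
  unfolding ev_def
proof (elim exE conjE)
  fix a b c d assume h: "b \<noteq> 0" "x = Fract a b" "\<forall>z\<in>Z. poly b z \<noteq> 0 \<and> f z = poly a z / poly b z"
    "d \<noteq> 0" "y = Fract c d" "\<forall>z\<in>Z. poly d z \<noteq> 0 \<and> g z = poly c z / poly d z"
  show "\<exists>a b. b \<noteq> 0 \<and> x + y = Fract a b \<and> (\<forall>z\<in>Z. poly b z \<noteq> 0 \<and> f z + g z = poly a z / poly b z)"
  proof (intro exI conjI ballI)
    show "b * d \<noteq> 0" using h by simp
    show "x + y = Fract (a * d + c * b) (b * d)" using h by simp
    fix z assume z: "z \<in> Z"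
    then have p: "poly b z \<noteq> 0" "poly d z \<noteq> 0" using h by auto
    then show "poly (b * d) z \<noteq> 0" by simp
    have "f z + g z = poly a z / poly b z + poly c z / poly d z" using h z by simp
    also have "\<dots> = (poly a z * poly d z + poly c z * poly b z) / (poly b z * poly d z)"
      using p by (rule add_frac_eq)
    finally show "f z + g z = poly (a * d + c * b) z / poly (b * d) z" by (simp only: poly_add poly_mult)
  qed
qed

lemma ev_mult: "ev Z x f \<Longrightarrow> ev Z y g \<Longrightarrow> ev Z (x * y) (\<lambda>z. f z * g z)"
  unfolding ev_def
proof (elim exE conjE)
  fix a b c d assume h: "b \<noteq> 0" "x = Fract a b" "\<forall>z\<in>Z. poly b z \<noteq> 0 \<and> f z = poly a z / poly b z"
    "d \<noteq> 0" "y = Fract c d" "\<forall>z\<in>Z. poly d z \<noteq> 0 \<and> g z = poly c z / poly d z"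
  show "\<exists>a b. b \<noteq> 0 \<and> x * y = Fract a b \<and> (\<forall>z\<in>Z. poly b z \<noteq> 0 \<and> f z * g z = poly a z / poly b z)"
  proof (intro exI conjI ballI)
    show "b * d \<noteq> 0" using h by simp
    show "x * y = Fract (a * c) (b * d)" using h by simp
    fix z assume z: "z \<in> Z"
    then have p: "poly b z \<noteq> 0" "poly d z \<noteq> 0" using h by auto
    then show "poly (b * d) z \<noteq> 0" by simp
    have "f z * g z = poly a z / poly b z * (poly c z / poly d z)" using h z by simp
    then show "f z * g z = poly (a * c) z / poly (b * d) z" by (simp only: poly_mult times_divide_times_eq)
  qed
qed

lemma ev_uminus: "ev Z x f \<Longrightarrow> ev Z (- x) (\<lambda>z. - f z)"
  unfolding ev_def
proof (elim exE conjE)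
  fix a b assume h: "b \<noteq> 0" "x = Fract a b" "\<forall>z\<in>Z. poly b z \<noteq> 0 \<and> f z = poly a z / poly b z"
  show "\<exists>a b. b \<noteq> 0 \<and> - x = Fract a b \<and> (\<forall>z\<in>Z. poly b z \<noteq> 0 \<and> - f z = poly a z / poly b z)"
  proof (intro exI conjI ballI)
    show "b \<noteq> 0" using h by simp
    show "- x = Fract (- a) b" using h by simp
    fix z assume z: "z \<in> Z"
    then show "poly b z \<noteq> 0" using h by auto
    have "- f z = - (poly a z / poly b z)" using h z by simp
    then show "- f z = poly (- a) z / poly b z" by (simp only: poly_minus minus_divide_left)
  qed
qed

lemma ev_diff: "ev Z x f \<Longrightarrow> ev Z y g \<Longrightarrow> ev Z (x - y) (\<lambda>z. f z - g z)"
  using ev_add[OF _ ev_uminus, of Z x f y g] by simp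

lemma ev_inverse: "ev Z x f \<Longrightarrow> (\<And>z. z \<in> Z \<Longrightarrow> f z \<noteq> 0) \<Longrightarrow> ev Z (inverse x) (\<lambda>z. 1 / f z)"
  unfolding ev_def
proof (elim exE conjE)
  fix a b assume h: "b \<noteq> 0" "x = Fract a b" "\<forall>z\<in>Z. poly b z \<noteq> 0 \<and> f z = poly a z / poly b z"
    and nz: "\<And>z. z \<in> Z \<Longrightarrow> f z \<noteq> 0"
  show "\<exists>a b. b \<noteq> 0 \<and> inverse x = Fract a b \<and> (\<forall>z\<in>Z. poly b z \<noteq> 0 \<and> 1 / f z = poly a z / poly b z)"
  proof (cases "a = 0")
    case True
    have Z: "Z = {}"
    proof (rule ccontr)
      assume "Z \<noteq> {}"
      then obtain z where z: "z \<in> Z" by blast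
      then have "f z = poly a z / poly b z" using h by simp
      then have "f z = 0" using True by simp
      then show False using nz[OF z] by simp
    qed
    have x0: "x = 0" using h True by (simp add: Zero_fract_def eq_fract)
    show ?thesis
    proof (intro exI conjI ballI)
      show "(1::complex poly) \<noteq> 0" by simp
      show "inverse x = Fract 0 1" using x0 by (simp add: Zero_fract_def[symmetric])
      fix z assume "z \<in> Z"
      then show "poly 1 z \<noteq> 0" "1 / f z = poly 0 z / poly 1 z" using Z by auto
    qed
  next
    case False
    show ?thesis
    proof (intro exI conjI ballI)
      show "a \<noteq> 0" using False .
      show "inverse x = Fract b a" using h by simp
      fix z assume z: "z \<in> Z"
      have fz: "f z = poly a z / poly b z" using h z by simp
      show "poly a z \<noteq> 0" using nz[OF z] fz by auto
      show "1 / f z = poly b z / poly a z" using fz by simp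
    qed
  qed
qed

lemma ev_divide: "ev Z x f \<Longrightarrow> ev Z y g \<Longrightarrow> (\<And>z. z \<in> Z \<Longrightarrow> g z \<noteq> 0) \<Longrightarrow> ev Z (x / y) (\<lambda>z. f z / g z)"
  using ev_mult[OF _ ev_inverse, of Z x f y g] by (simp add: divide_inverse)

lemma ev_power: "ev Z x f \<Longrightarrow> ev Z (x ^ m) (\<lambda>z. f z ^ m)"
  by (induction m) (auto intro: ev_mult ev_one)

lemma ev_sum: "(\<And>k. k \<in> A \<Longrightarrow> ev Z (x k) (f k)) \<Longrightarrow> ev Z (\<Sum>k\<in>A. x k) (\<lambda>z. \<Sum>k\<in>A. f k z)"
  by (induction A rule: infinite_finite_induct) (auto intro: ev_add ev_zero)

lemma ev_prod: "(\<And>k. k \<in> A \<Longrightarrow> ev Z (x k) (f k)) \<Longrightarrow> ev Z (\<Prod>k\<in>A. x k) (\<lambda>z. \<Prod>k\<in>A. f k z)"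
  by (induction A rule: infinite_finite_induct) (auto intro: ev_mult ev_one)

lemma ev_qpoch: "ev Z x f \<Longrightarrow> ev Z y g \<Longrightarrow> ev Z (qpoch x y k) (\<lambda>z. qpoch (f z) (g z) k)"
  unfolding qpoch_def by (intro ev_prod ev_diff ev_one ev_mult ev_power)

lemma ev_qvar: "ev Z qvar (\<lambda>z. z)"
  using ev_poly[of Z "[:0,1:]"] by (simp add: qvar_def)

lemma ev_cong: "ev Z x f \<Longrightarrow> (\<And>z. z \<in> Z \<Longrightarrow> f z = g z) \<Longrightarrow> ev Z x g"
  unfolding ev_def by metis

definition om :: "nat \<Rightarrow> complex" where "om n = exp (2 * of_real pi * \<i> / of_nat n)"

lemma om_pow_eq_1: assumes "n > 0" shows "om n ^ t = 1 \<longleftrightarrow> n dvd t"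
proof -
  have "om n ^ t = exp (of_nat t * (2 * of_real pi * \<i> / of_nat n))"
    unfolding om_def by (rule exp_of_nat_mult[symmetric])
  also have "\<dots> = 1 \<longleftrightarrow> (\<exists>m::int. 2 * pi * real t / real n = of_int (2 * m) * pi)"
    by (subst exp_eq_1) (simp add: field_simps)
  also have "\<dots> \<longleftrightarrow> (\<exists>m::int. real t = of_int m * real n)"
    using assms by (auto simp: field_simps)
  also have "\<dots> \<longleftrightarrow> (\<exists>m::int. int t = m * int n)"
    by (metis of_int_eq_iff of_int_mult of_int_of_nat_eq)
  also have "\<dots> \<longleftrightarrow> n dvd t"
    by (metis dvd_def int_dvd_int_iff mult.commute)
  finally show ?thesis .
qed

lemma om_root: "exp (2 * of_real pi * \<i> * of_nat j / of_nat n) = om n ^ j"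
  unfolding om_def by (simp add: exp_of_nat_mult[symmetric] field_simps)

lemma cyclotomic_om: "cyclotomic n = (\<Prod>j\<in>{j. 1 \<le> j \<and> j \<le> n \<and> coprime j n}. [:- (om n ^ j), 1:])"
  unfolding cyclotomic_def om_root ..

lemma om_inj: assumes "n > 0" shows "inj_on (\<lambda>j. om n ^ j) {1..n}"
proof (rule inj_onI)
  fix i j assume ij: "i \<in> {1..n}" "j \<in> {1..n}" "om n ^ i = om n ^ j"
  have nz: "om n \<noteq> 0" unfolding om_def by simp
  show "i = j"
  proof (rule ccontr)
    assume "i \<noteq> j"
    then consider "i < j" | "j < i" by linarith
    then show False
    proof cases
      case 1
      have "om n ^ j = om n ^ i * om n ^ (j - i)" using 1 by (simp add: power_add[symmetric])
      then have "om n ^ (j - i) = 1" using ij nz by simp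
      then have "n dvd (j - i)" using om_pow_eq_1[OF assms] by simp
      then show False using 1 ij by (auto dest: dvd_imp_le)
    next
      case 2
      have "om n ^ i = om n ^ j * om n ^ (i - j)" using 2 by (simp add: power_add[symmetric])
      then have "om n ^ (i - j) = 1" using ij nz by simp
      then have "n dvd (i - j)" using om_pow_eq_1[OF assms] by simp
      then show False using 2 ij by (auto dest: dvd_imp_le)
    qed
  qed
qed

lemma prod_lin_dvd:
  fixes w :: "nat \<Rightarrow> complex"
  assumes "finite S" "inj_on w S" "\<And>j. j \<in> S \<Longrightarrow> poly a (w j) = 0"
  shows "(\<Prod>j\<in>S. [:- w j, 1:]) dvd a"
  using assms
proof (induction S arbitrary: a rule: finite_induct)
  case empty then show ?case by simp
next
  case (insert x S)
  have "(\<Prod>j\<in>S. [:- w j, 1:]) dvd a" using insert by auto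
  then obtain c where c: "a = (\<Prod>j\<in>S. [:- w j, 1:]) * c" by (elim dvdE)
  have "poly (\<Prod>j\<in>S. [:- w j, 1:]) (w x) \<noteq> 0"
    using insert.prems(1) insert.hyps by (auto simp: poly_prod)
  moreover have "poly a (w x) = 0" using insert.prems by auto
  ultimately have "poly c (w x) = 0" using c by simp
  then have "[:- w x, 1:] dvd c" using poly_eq_0_iff_dvd by blast
  moreover have "(\<Prod>j\<in>insert x S. [:- w j, 1:]) = [:- w x, 1:] * (\<Prod>j\<in>S. [:- w j, 1:])"
    using insert.hyps by simp
  ultimately show ?case using c by (metis mult.commute mult_dvd_mono dvd_refl)
qed

definition prims :: "nat \<Rightarrow> complex set" where
  "prims n = (\<lambda>j. om n ^ j) ` {j. 1 \<le> j \<and> j \<le> n \<and> coprime j n}"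

lemma cyc_dvd: assumes "n > 0" "\<And>z. z \<in> prims n \<Longrightarrow> poly a z = 0" shows "cyclotomic n dvd a"
  unfolding cyclotomic_om
  by (rule prod_lin_dvd) (use assms om_inj[OF assms(1)] in \<open>auto simp: prims_def intro: inj_on_subset\<close>)

lemma cyc_coprime: assumes "\<And>z. z \<in> prims n \<Longrightarrow> poly b z \<noteq> 0" shows "coprime b (cyclotomic n)"
  unfolding cyclotomic_om
proof (rule prod_coprime_right)
  fix j assume j: "j \<in> {j. 1 \<le> j \<and> j \<le> n \<and> coprime j n}"
  have "prime_elem [:- (om n ^ j), 1:]" by (rule prime_elem_linear_field_poly) simp
  moreover have "\<not> [:- (om n ^ j), 1:] dvd b"
    using assms[of "om n ^ j"] j by (auto simp: prims_def poly_eq_0_iff_dvd[symmetric])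
  ultimately show "coprime b [:- (om n ^ j), 1:]"
    using prime_elem_imp_coprime coprime_commute by blast
qed

lemma rf_from_ev:
  assumes "n > 0" "ev (prims n) (x - y) f" "\<And>z. z \<in> prims n \<Longrightarrow> f z = 0"
  shows "rf_cong x y (cyclotomic n)"
proof -
  obtain a b where ab: "b \<noteq> 0" "x - y = Fract a b" "\<forall>z\<in>prims n. poly b z \<noteq> 0 \<and> f z = poly a z / poly b z"
    using assms(2) unfolding ev_def by blast
  have "\<And>z. z \<in> prims n \<Longrightarrow> poly a z = 0" using ab(3) assms(3) by fastforce
  then show ?thesis unfolding rf_cong_def using ab cyc_dvd[OF assms(1)] cyc_coprime by blast
qed

lemma prims_prop: assumes "n > 0" "z \<in> prims n" shows "z ^ t = 1 \<longleftrightarrow> n dvd t"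
proof -
  obtain j where j: "z = om n ^ j" "1 \<le> j" "coprime j n" using assms(2) by (auto simp: prims_def)
  have "z ^ t = om n ^ (j * t)" using j by (simp add: power_mult)
  then have "z ^ t = 1 \<longleftrightarrow> n dvd j * t" using om_pow_eq_1[OF assms(1)] by simp
  also have "\<dots> \<longleftrightarrow> n dvd t" using j(3) by (simp add: coprime_commute coprime_dvd_mult_right_iff)
  finally show ?thesis .
qed

fun gb :: "complex \<Rightarrow> nat \<Rightarrow> nat \<Rightarrow> complex" where
  "gb p n 0 = 1"
| "gb p 0 (Suc k) = 0"
| "gb p (Suc n) (Suc k) = p powi (int n - int k) * gb p n k + gb p n (Suc k)"

lemma qpoch_0 [simp]: "qpoch a p 0 = 1"
  unfolding qpoch_def by simp

lemma qpoch_Suc: "qpoch a p (Suc m) = qpoch a p m * (1 - a * p ^ m)"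
  unfolding qpoch_def by simp

lemma qpoch_add: "qpoch a p (m + k) = qpoch a p m * qpoch (a * p ^ m) p k"
  by (induction k) (simp_all add: qpoch_Suc qpoch_def power_add mult_ac)

lemma gb_zero: "n < k \<Longrightarrow> gb p n k = 0"
proof (induction n arbitrary: k)
  case 0 then show ?case by (cases k) auto
next
  case (Suc n) then show ?case by (cases k) auto
qed

lemma gb_fact: "k \<le> n \<Longrightarrow> gb p n k * qpoch p p k * qpoch p p (n - k) = qpoch p p n"
proof (induction n arbitrary: k)
  case 0 then show ?case by simp
next
  case (Suc n)
  note IH = Suc.IH
  show ?case
  proof (cases k)
    case 0 then show ?thesis by simp
  next
    case (Suc k')
    note kk = Suc
    show ?thesis
    proof (cases "k' = n")
      case True
      have "gb p n n * qpoch p p n = qpoch p p n" using IH[of n] by simp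
      then show ?thesis using True kk by (simp add: gb_zero qpoch_Suc mult_ac) blast
    next
      case False
      then have kn: "k' < n" using Suc.prems kk by simp
      have pw: "p powi (int n - int k') = p ^ (n - k')"
      proof -
        have "int n - int k' = int (n - k')" using kn by simp
        then show ?thesis by (simp only: power_int_of_nat)
      qed
      have e1: "gb p n k' * qpoch p p k' * qpoch p p (n - k') = qpoch p p n" using kn by (intro IH) simp
      have e2: "gb p n (Suc k') * qpoch p p (Suc k') * qpoch p p (n - Suc k') = qpoch p p n" using kn by (intro IH) simp
      have d: "n - k' = Suc (n - Suc k')" using kn by simp
      have q1: "qpoch p p (n - k') = qpoch p p (n - Suc k') * (1 - p * p ^ (n - Suc k'))"
        by (simp add: d qpoch_Suc)
      have q2: "qpoch p p (Suc k') = qpoch p p k' * (1 - p * p ^ k')" by (simp add: qpoch_Suc)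
      have alg: "\<And>x G1 G2 Q1 Q2 y w::complex. (x * G1 + G2) * (Q1 * (1 - y)) * (Q2 * (1 - w))
         = x * (1 - y) * (G1 * Q1 * (Q2 * (1 - w))) + (1 - w) * (G2 * (Q1 * (1 - y)) * Q2)"
        by (simp add: algebra_simps)
      have "gb p (Suc n) k * qpoch p p k * qpoch p p (Suc n - k)
          = (p ^ (n - k') * gb p n k' + gb p n (Suc k')) * (qpoch p p k' * (1 - p * p ^ k')) * (qpoch p p (n - Suc k') * (1 - p * p ^ (n - Suc k')))"
        unfolding kk gb.simps(3) pw q2[symmetric] q1[symmetric] by simp
      also have "\<dots> = p ^ (n - k') * (1 - p * p ^ k') * (gb p n k' * qpoch p p k' * qpoch p p (n - k'))
          + (1 - p * p ^ (n - Suc k')) * (gb p n (Suc k') * qpoch p p (Suc k') * qpoch p p (n - Suc k'))"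
        unfolding q1 q2 by (rule alg)
      also have "\<dots> = qpoch p p n * (p ^ (n - k') * (1 - p * p ^ k') + (1 - p * p ^ (n - Suc k')))"
        unfolding e1 e2 by (simp add: algebra_simps)
      also have "p ^ (n - k') * (1 - p * p ^ k') + (1 - p * p ^ (n - Suc k')) = 1 - p * p ^ n"
      proof -
        have "p ^ (n - k') * (p * p ^ k') = p * p ^ n" using kn
          by (metis le_add_diff_inverse2 less_imp_le mult.left_commute power_add)
        moreover have "p * p ^ (n - Suc k') = p ^ (n - k')" using d by simp
        ultimately show ?thesis by (simp add: algebra_simps) (metis mult.commute)
      qed
      finally show ?thesis by (simp add: qpoch_Suc)
    qed
  qed
qed

lemma vandermonde:
  assumes p0: "p \<noteq> 0"
  shows "gb p (m + n) k = (\<Sum>j\<le>k. p powi (int j * (int m - int k + int j)) * gb p m (k - j) * gb p n j)"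
proof (induction n arbitrary: k)
  case 0
  have "(\<Sum>j\<le>k. p powi (int j * (int m - int k + int j)) * gb p m (k - j) * gb p 0 j)
      = (\<Sum>j\<in>{0}. p powi (int j * (int m - int k + int j)) * gb p m (k - j) * gb p 0 j)"
    by (rule sum.mono_neutral_right) (auto simp: gb_zero)
  then show ?case by simp
next
  case (Suc n)
  note IH = Suc.IH
  show ?case
  proof (cases k)
    case 0 then show ?thesis by simp
  next
    case (Suc k')
    note kk = Suc
    define T where "T = (\<lambda>i. p powi (int i * (int m - int k' + int i)) * gb p m (k' - i))"
    define E where "E = (\<lambda>i. p powi ((int i + 1) * (int m - int k' + int i)) * gb p m (k' - i))"
    have ex: "\<And>i. int (Suc i) * (int m - int (Suc k') + int (Suc i)) = (int i + 1) * (int m - int k' + int i)"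
      by (simp add: algebra_simps)
    have A: "(\<Sum>i\<le>k'. E i * (p powi (int n - int i) * gb p n i))
          = p powi (int m + int n - int k') * (\<Sum>i\<le>k'. T i * gb p n i)"
      unfolding sum_distrib_left
    proof (rule sum.cong[OF refl])
      fix i
      have "(int i + 1) * (int m - int k' + int i) + (int n - int i) = (int m + int n - int k') + int i * (int m - int k' + int i)"
        by (simp add: algebra_simps)
      then have "p powi ((int i + 1) * (int m - int k' + int i)) * p powi (int n - int i)
          = p powi (int m + int n - int k') * p powi (int i * (int m - int k' + int i))"
        using p0 by (metis power_int_add)
      then show "E i * (p powi (int n - int i) * gb p n i) = p powi (int m + int n - int k') * (T i * gb p n i)"
        unfolding E_def T_def by (simp add: mult_ac)
    qed
    have B: "(\<Sum>j\<le>Suc k'. p powi (int j * (int m - int (Suc k') + int j)) * gb p m (Suc k' - j) * gb p n j)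
        = gb p m (Suc k') + (\<Sum>i\<le>k'. E i * gb p n (Suc i))"
      unfolding sum.atMost_Suc_shift E_def ex by simp
    have C: "(\<Sum>j\<le>Suc k'. p powi (int j * (int m - int (Suc k') + int j)) * gb p m (Suc k' - j) * gb p (Suc n) j)
       = gb p m (Suc k') + (\<Sum>i\<le>k'. E i * (p powi (int n - int i) * gb p n i + gb p n (Suc i)))"
      unfolding sum.atMost_Suc_shift E_def ex by simp
    have "(\<Sum>j\<le>k. p powi (int j * (int m - int k + int j)) * gb p m (k - j) * gb p (Suc n) j)
       = (\<Sum>i\<le>k'. E i * (p powi (int n - int i) * gb p n i)) + (gb p m (Suc k') + (\<Sum>i\<le>k'. E i * gb p n (Suc i)))"
      unfolding kk C by (simp add: distrib_left sum.distrib)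
    also have "\<dots> = p powi (int m + int n - int k') * gb p (m + n) k' + gb p (m + n) (Suc k')"
      unfolding A B[symmetric] IH T_def by simp
    also have "\<dots> = gb p (m + Suc n) k"
      using kk by simp
    finally show ?thesis by simp
  qed
qed

lemma eval_sum:
  fixes z :: complex
  assumes z1: "z ^ (4*M+1) = 1" and Mn: "M < n" and nz: "\<And>m. 1 \<le> m \<Longrightarrow> m < n \<Longrightarrow> z ^ (4*m) \<noteq> 1"
  shows "(\<Sum>k<n. (qpoch z (z^4) k)\<^sup>2 / (qpoch (z^4) (z^4) k)\<^sup>2 * z^(2*k)) = gb (z^4) (2*M) M"
proof -
  define p where "p = z ^ 4"
  have z0: "z \<noteq> 0" using z1 by auto
  have p0: "p \<noteq> 0" using z0 by (simp add: p_def)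
  have ppow: "\<And>j. p * p ^ j = z ^ (4 * Suc j)" by (simp add: p_def power_mult[symmetric] power_add)
  have qnz: "qpoch p p k \<noteq> 0" if "k < n" for k
  proof -
    have "1 - p * p ^ j \<noteq> 0" if "j < k" for j using nz[of "Suc j"] ppow[of j] that \<open>k < n\<close> by simp
    then show ?thesis unfolding qpoch_def by simp
  qed
  have van: "qpoch z p k = 0" if "M < k" for k
  proof -
    have "z * p ^ M = z ^ (4*M+1)" by (simp add: p_def power_mult[symmetric] power_add)
    then have "z * p ^ M = 1" using z1 by (rule trans)
    then have "1 - z * p ^ M = 0" by simp
    then show ?thesis unfolding qpoch_def using that by (intro prod_zero) auto
  qed
  define S where "S = (\<lambda>k. \<Sum>j<k. 4*j+1::nat)"
  have fac: "qpoch z p k = (-1)^k * z^(S k) * (\<Prod>j<k. (1 - p^(M-j)))" if "k \<le> M" for k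
    using that
  proof (induction k)
    case 0 then show ?case by (simp add: S_def)
  next
    case (Suc k)
    have kM: "k < M" using Suc.prems by simp
    have a: "z * p ^ k = z ^ (4*k+1)" by (simp add: p_def power_mult[symmetric])
    have b: "z ^ (4*k+1) * p ^ (M-k) = 1"
    proof -
      have "z ^ (4*k+1) * p ^ (M-k) = z ^ (4*k+1 + 4*(M-k))" by (simp add: p_def power_mult[symmetric] power_add)
      also have "4*k+1 + 4*(M-k) = 4*M+1" using kM by simp
      finally show ?thesis using z1 by (rule trans)
    qed
    have f: "1 - z * p ^ k = - (z ^ (4*k+1)) * (1 - p ^ (M-k))"
    proof -
      have "- (z ^ (4*k+1)) * (1 - p ^ (M-k)) = z ^ (4*k+1) * p ^ (M-k) - z ^ (4*k+1)" by (simp add: algebra_simps)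
      also have "\<dots> = 1 - z * p ^ k" by (simp only: a b)
      finally show ?thesis by (rule sym)
    qed
    show ?case
      using Suc.IH kM unfolding qpoch_Suc f by (simp add: S_def power_add mult_ac)
  qed
  have pm: "(\<Prod>j<k. (1 - p^(M-j))) * qpoch p p (M-k) = qpoch p p M" if "k \<le> M" for k
    using that
  proof (induction k)
    case 0 then show ?case by simp
  next
    case (Suc k)
    have d: "M - k = Suc (M - Suc k)" using Suc.prems by simp
    have "qpoch p p (M - k) = qpoch p p (M - Suc k) * (1 - p ^ (M - k))"
      unfolding d qpoch_Suc by simp
    then show ?case using Suc by (simp add: mult_ac)
  qed
  have sq: "2 * S k + 2 * k = 4 * (k * k)" for k
    by (induction k) (simp_all add: S_def algebra_simps)
  have gbq: "gb p M k = qpoch p p M / (qpoch p p k * qpoch p p (M - k))" if "k \<le> M" for k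
    using gb_fact[OF that, of p] qnz[of k] qnz[of "M-k"] that Mn
    by (simp add: field_simps)
  have tm: "(qpoch z p k)\<^sup>2 / (qpoch p p k)\<^sup>2 * z^(2*k) = p ^ (k*k) * (gb p M k)\<^sup>2" if "k \<le> M" for k
  proof -
    have q1: "qpoch p p (M - k) \<noteq> 0" "qpoch p p k \<noteq> 0" using qnz that Mn by auto
    have P: "(\<Prod>j<k. (1 - p^(M-j))) = qpoch p p M / qpoch p p (M - k)"
      using pm[OF that] q1 by (simp add: field_simps)
    have zz: "(z ^ S k)\<^sup>2 * z ^ (2*k) = p ^ (k*k)"
    proof -
      have "(z ^ S k)\<^sup>2 * z ^ (2*k) = z ^ (2 * S k + 2 * k)" by (simp add: power_add power_mult[symmetric] mult_ac)
      also have "\<dots> = p ^ (k*k)" unfolding sq by (simp add: p_def power_mult)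
      finally show ?thesis .
    qed
    have "(qpoch z p k)\<^sup>2 / (qpoch p p k)\<^sup>2 * z^(2*k)
        = ((z ^ S k)\<^sup>2 * z ^ (2*k)) * (qpoch p p M / qpoch p p (M - k))\<^sup>2 / (qpoch p p k)\<^sup>2"
    proof -
      have m1: "((-1::complex)^k)\<^sup>2 = 1"
      proof -
        have "((-1::complex)^k)\<^sup>2 = ((-1)\<^sup>2)^k" by (metis power_mult mult.commute)
        then show ?thesis by simp
      qed
      show ?thesis unfolding fac[OF that] P power_mult_distrib m1 using q1 by (simp add: field_simps)
    qed
    also have "\<dots> = p ^ (k*k) * (gb p M k)\<^sup>2"
      unfolding zz gbq[OF that] using q1 by (simp add: field_simps power_mult_distrib)
    finally show ?thesis .
  qed
  have sym: "gb p M (M - j) = gb p M j" if "j \<le> M" for j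
    using gbq[of j] gbq[of "M-j"] that by (simp add: mult.commute)
  have "(\<Sum>k<n. (qpoch z p k)\<^sup>2 / (qpoch p p k)\<^sup>2 * z^(2*k))
      = (\<Sum>k\<le>M. (qpoch z p k)\<^sup>2 / (qpoch p p k)\<^sup>2 * z^(2*k))"
    by (rule sum.mono_neutral_right) (use Mn van in auto)
  also have "\<dots> = (\<Sum>k\<le>M. p ^ (k*k) * (gb p M k)\<^sup>2)"
    by (rule sum.cong[OF refl]) (rule tm, simp)
  also have "\<dots> = (\<Sum>j\<le>M. p powi (int j * (int M - int M + int j)) * gb p M (M - j) * gb p M j)"
  proof (rule sum.cong[OF refl])
    fix j assume "j \<in> {..M}"
    then have jM: "j \<le> M" by simp
    have "int j * (int M - int M + int j) = int (j * j)" by simp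
    then have "p powi (int j * (int M - int M + int j)) = p ^ (j * j)" by (simp only: power_int_of_nat)
    then show "p ^ (j*j) * (gb p M j)\<^sup>2 = p powi (int j * (int M - int M + int j)) * gb p M (M - j) * gb p M j"
      using sym[OF jM] by (simp add: power2_eq_square)
  qed
  also have "\<dots> = gb p (M + M) M"
    by (rule vandermonde[OF p0, symmetric])
  finally show ?thesis by (simp add: p_def mult_2)
qed

lemma case1:
  fixes z :: complex
  assumes z1: "z ^ (4*N+1) = 1" and nz: "\<And>m. 1 \<le> m \<Longrightarrow> m < 4*N+1 \<Longrightarrow> z ^ (4*m) \<noteq> 1"
  shows "gb (z^4) (2*N) N = qpoch (z^3) (z^4) N / qpoch (z^4) (z^4) N"
proof -
  define p where "p = z ^ 4"
  have qnz: "qpoch p p N \<noteq> 0"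
  proof -
    have "1 - p * p ^ j \<noteq> 0" if "j < N" for j
    proof
      assume "1 - p * p ^ j = 0"
      moreover have "p * p ^ j = z ^ (4 * Suc j)" by (simp add: p_def power_mult[symmetric] power_add)
      ultimately show False using nz[of "Suc j"] that by simp
    qed
    then show ?thesis unfolding qpoch_def by simp
  qed
  have "p * p ^ N = z ^ 3"
  proof -
    have a: "p * p ^ N = z ^ (4 * Suc N)" by (simp add: p_def power_mult[symmetric] power_add)
    have b: "4 * Suc N = (4*N+1) + 3" by simp
    have "p * p ^ N = z ^ ((4*N+1) + 3)" by (simp only: a b)
    also have "\<dots> = z ^ (4*N+1) * z ^ 3" by (rule power_add)
    finally show ?thesis using z1 by simp
  qed
  then have e: "qpoch p p (2*N) = qpoch p p N * qpoch (z^3) p N" by (simp add: qpoch_add mult_2)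
  have g: "gb p (2*N) N * qpoch p p N * qpoch p p N = qpoch p p (2*N)" using gb_fact[of N "2*N" p] by simp
  have "(gb p (2*N) N * qpoch p p N) * qpoch p p N = qpoch (z^3) p N * qpoch p p N"
    using e g by (simp add: mult.commute)
  then have "gb p (2*N) N * qpoch p p N = qpoch (z^3) p N" using qnz by (rule mult_right_cancel[THEN iffD1, rotated])
  then show ?thesis using qnz unfolding p_def[symmetric] by (simp add: eq_divide_eq)
qed

lemma case3:
  fixes z :: complex
  assumes z1: "z ^ (4*N+3) = 1" and nz: "\<And>m. 1 \<le> m \<Longrightarrow> m < 4*N+3 \<Longrightarrow> z ^ (4*m) \<noteq> 1"
  shows "gb (z^4) (2*(3*N+2)) (3*N+2) = 0"
proof -
  define p where "p = z ^ 4"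
  define M where "M = 3*N+2"
  have qnz: "qpoch p p M \<noteq> 0"
  proof -
    have "1 - p * p ^ j \<noteq> 0" if "j < M" for j
    proof
      assume "1 - p * p ^ j = 0"
      moreover have "p * p ^ j = z ^ (4 * Suc j)" by (simp add: p_def power_mult[symmetric] power_add)
      ultimately show False using nz[of "Suc j"] that by (simp add: M_def)
    qed
    then show ?thesis unfolding qpoch_def by simp
  qed
  have "qpoch p p (M + M) = 0"
  proof -
    have "p * p ^ (4*N+2) = p ^ Suc (4*N+2)" by (rule power_Suc[symmetric])
    also have "\<dots> = (z ^ (4*N+3)) ^ 4" unfolding p_def power_mult[symmetric] by (rule arg_cong[where f="\<lambda>x. z ^ x"]) simp
    finally have h: "p * p ^ (4*N+2) = 1" using z1 by simp
    have j: "4*N+2 \<in> {..<M + M}" by (simp add: M_def)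
    show ?thesis unfolding qpoch_def by (rule prod_zero[OF finite_lessThan]) (rule bexI[OF _ j], use h in simp)
  qed
  moreover have "gb p (M+M) M * qpoch p p M * qpoch p p M = qpoch p p (M+M)" using gb_fact[of M "M+M" p] by simp
  ultimately show ?thesis using qnz unfolding p_def[symmetric] M_def[symmetric] by (simp add: mult_2)
qed

lemma qp_nz:
  fixes z :: complex
  assumes nz: "\<And>m. 1 \<le> m \<Longrightarrow> m < n \<Longrightarrow> z ^ (4*m) \<noteq> 1" and "k < n"
  shows "qpoch (z^4) (z^4) k \<noteq> 0"
proof -
  have "1 - z^4 * (z^4) ^ j \<noteq> 0" if "j < k" for j
  proof
    assume "1 - z^4 * (z^4) ^ j = 0"
    moreover have "z^4 * (z^4) ^ j = z ^ (4 * Suc j)" by (simp add: power_mult[symmetric] power_add)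
    ultimately show False using nz[of "Suc j"] that assms(2) by simp
  qed
  then show ?thesis unfolding qpoch_def by simp
qed

lemma prims_nz:
  assumes "n > 0" "odd n" "z \<in> prims n" "1 \<le> m" "m < n"
  shows "z ^ (4*m) \<noteq> 1"
proof
  assume "z ^ (4*m) = 1"
  then have "n dvd 4 * m" using prims_prop[OF assms(1,3)] by simp
  moreover have "coprime n (4::nat)"
    using coprime_power_right_iff[of n 2 2] assms(2) by simp
  ultimately have "n dvd m" by (metis coprime_dvd_mult_left_iff mult.commute)
  then show False using assms(4,5) by (auto dest: dvd_imp_le)
qed

lemma ev_lhs:
  assumes "\<And>z k. z \<in> Z \<Longrightarrow> k < n \<Longrightarrow> qpoch (z^4) (z^4) k \<noteq> 0"
  shows "ev Z (\<Sum>k<n. (qpoch qvar (qvar ^ 4) k)\<^sup>2 / (qpoch (qvar ^ 4) (qvar ^ 4) k)\<^sup>2 * qvar ^ (2 * k))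
     (\<lambda>z. \<Sum>k<n. (qpoch z (z^4) k)\<^sup>2 / (qpoch (z^4) (z^4) k)\<^sup>2 * z ^ (2 * k))"
  using assms
  by (intro ev_sum ev_mult ev_divide ev_power ev_qpoch ev_qvar) auto

theorem theorem1:
  fixes n :: nat
  assumes "n > 0"
  shows "(n mod 4 = 1 \<longrightarrow>
           rf_cong (\<Sum>k<n. (qpoch qvar (qvar ^ 4) k)\<^sup>2 / (qpoch (qvar ^ 4) (qvar ^ 4) k)\<^sup>2 * qvar ^ (2 * k))
                   (qpoch (qvar ^ 3) (qvar ^ 4) ((n - 1) div 4) / qpoch (qvar ^ 4) (qvar ^ 4) ((n - 1) div 4))
                   (cyclotomic n))
       \<and> (n mod 4 = 3 \<longrightarrow>
           rf_cong (\<Sum>k<n. (qpoch qvar (qvar ^ 4) k)\<^sup>2 / (qpoch (qvar ^ 4) (qvar ^ 4) k)\<^sup>2 * qvar ^ (2 * k))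
                   0 (cyclotomic n))"
proof (intro conjI impI)
  assume n1: "n mod 4 = 1"
  define N where "N = (n - 1) div 4"
  have nN: "n = 4*N+1" using n1 unfolding N_def by presburger
  have odd: "odd n" using nN by simp
  have nzZ: "\<And>z m. z \<in> prims n \<Longrightarrow> 1 \<le> m \<Longrightarrow> m < n \<Longrightarrow> z ^ (4*m) \<noteq> 1"
    using prims_nz[OF assms odd] by blast
  have qz: "\<And>z k. z \<in> prims n \<Longrightarrow> k < n \<Longrightarrow> qpoch (z^4) (z^4) k \<noteq> 0"
    using qp_nz nzZ by blast
  have L: "ev (prims n) (\<Sum>k<n. (qpoch qvar (qvar ^ 4) k)\<^sup>2 / (qpoch (qvar ^ 4) (qvar ^ 4) k)\<^sup>2 * qvar ^ (2 * k))
     (\<lambda>z. \<Sum>k<n. (qpoch z (z^4) k)\<^sup>2 / (qpoch (z^4) (z^4) k)\<^sup>2 * z ^ (2 * k))"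
    by (rule ev_lhs) (use qz in auto)
  have R: "ev (prims n) (qpoch (qvar ^ 3) (qvar ^ 4) N / qpoch (qvar ^ 4) (qvar ^ 4) N)
      (\<lambda>z. qpoch (z^3) (z^4) N / qpoch (z^4) (z^4) N)"
    by (intro ev_divide ev_power ev_qpoch ev_qvar) (use qz nN in auto)
  show "rf_cong (\<Sum>k<n. (qpoch qvar (qvar ^ 4) k)\<^sup>2 / (qpoch (qvar ^ 4) (qvar ^ 4) k)\<^sup>2 * qvar ^ (2 * k))
                   (qpoch (qvar ^ 3) (qvar ^ 4) ((n - 1) div 4) / qpoch (qvar ^ 4) (qvar ^ 4) ((n - 1) div 4))
                   (cyclotomic n)"
    unfolding N_def[symmetric]
  proof (rule rf_from_ev[OF assms ev_diff[OF L R]])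
    fix z assume z: "z \<in> prims n"
    have z1: "z ^ (4*N+1) = 1" using prims_prop[OF assms z, of n] nN by simp
    have "(\<Sum>k<n. (qpoch z (z^4) k)\<^sup>2 / (qpoch (z^4) (z^4) k)\<^sup>2 * z ^ (2 * k)) = gb (z^4) (2*N) N"
      by (rule eval_sum[OF z1]) (use nN nzZ[OF z] in auto)
    also have "\<dots> = qpoch (z^3) (z^4) N / qpoch (z^4) (z^4) N"
      by (rule case1[OF z1]) (use nN nzZ[OF z] in auto)
    finally show "(\<Sum>k<n. (qpoch z (z^4) k)\<^sup>2 / (qpoch (z^4) (z^4) k)\<^sup>2 * z ^ (2 * k))
        - qpoch (z^3) (z^4) N / qpoch (z^4) (z^4) N = 0" by simp
  qed
next
  assume n3: "n mod 4 = 3"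
  define N where "N = n div 4"
  have nN: "n = 4*N+3" using n3 unfolding N_def by presburger
  have odd: "odd n" using nN by simp
  have nzZ: "\<And>z m. z \<in> prims n \<Longrightarrow> 1 \<le> m \<Longrightarrow> m < n \<Longrightarrow> z ^ (4*m) \<noteq> 1"
    using prims_nz[OF assms odd] by blast
  have qz: "\<And>z k. z \<in> prims n \<Longrightarrow> k < n \<Longrightarrow> qpoch (z^4) (z^4) k \<noteq> 0"
    using qp_nz nzZ by blast
  have L: "ev (prims n) (\<Sum>k<n. (qpoch qvar (qvar ^ 4) k)\<^sup>2 / (qpoch (qvar ^ 4) (qvar ^ 4) k)\<^sup>2 * qvar ^ (2 * k))
     (\<lambda>z. \<Sum>k<n. (qpoch z (z^4) k)\<^sup>2 / (qpoch (z^4) (z^4) k)\<^sup>2 * z ^ (2 * k))"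
    by (rule ev_lhs) (use qz in auto)
  show "rf_cong (\<Sum>k<n. (qpoch qvar (qvar ^ 4) k)\<^sup>2 / (qpoch (qvar ^ 4) (qvar ^ 4) k)\<^sup>2 * qvar ^ (2 * k))
                   0 (cyclotomic n)"
  proof (rule rf_from_ev[OF assms ev_diff[OF L ev_zero]])
    fix z assume z: "z \<in> prims n"
    have z1: "z ^ (4*(3*N+2)+1) = 1"
    proof -
      have "4*(3*N+2)+1 = 3 * n" using nN by simp
      moreover have "z ^ (3*n) = 1" using prims_prop[OF assms z, of "3*n"] by simp
      ultimately show ?thesis by simp
    qed
    have zn: "z ^ (4*N+3) = 1" using prims_prop[OF assms z, of n] nN by simp
    have "(\<Sum>k<n. (qpoch z (z^4) k)\<^sup>2 / (qpoch (z^4) (z^4) k)\<^sup>2 * z ^ (2 * k)) = gb (z^4) (2*(3*N+2)) (3*N+2)"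
      by (rule eval_sum[OF z1]) (use nN nzZ[OF z] in auto)
    also have "\<dots> = 0"
      by (rule case3[OF zn]) (use nN nzZ[OF z] in auto)
    finally show "(\<Sum>k<n. (qpoch z (z^4) k)\<^sup>2 / (qpoch (z^4) (z^4) k)\<^sup>2 * z ^ (2 * k)) - 0 = 0" by simp
  qed
qed

end
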